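(* Let $\mathfrak{n}$ be a $2$-step nilpotent real Lie algebra whose center $\mathfrak{z}$ has $\dim\mathfrak{z}=2$. Then every complex structure on $\mathfrak{n}$ is $2$-step. In particular, if $\mathfrak{n}'=\mathfrak{z}$ and the first Betti number of $\mathfrak{n}$ satisfies $b_1=\dim\mathfrak{n}-2$, then every complex structure on $\mathfrak{n}$ is $2$-step.
   Context: A complex structure on a real Lie algebra $\mathfrak{g}$ is a linear map $J:\mathfrak{g}\to\mathfrak{g}$ with $J^2=-I$ and $N_J(x,y):=[x,y]+J([Jx,y]+[x,Jy])-[Jx,Jy]=0$ for all $x,y\in\mathfrak{g}$. Given such $J$, define inductively $\mathfrak{a}_0(J)=0$ and $\mathfrak{a}_\ell(J)=\{x\in\mathfrak{g}: [x,\mathfrak{g}]\subset\mathfrak{a}_{\ell-1}(J)\text{ and }[Jx,\mathfrak{g}]\subset\mathfrak{a}_{\ell-1}(J)\}$ for $\ell\ge1$. $J$ is called nilpotent if $\mathfrak{a}_t(J)=\mathfrak{g}$ for some positive integer $t$, and $t$-step if $t$ is the smallest such integer. A Lie algebra $\mathfrak{n}$ is $2$-step nilpotent if it is non-abelian and $\mathfrak{n}'=[\mathfrak{n},\mathfrak{n}]\subset\mathfrak{z}$. The first Betti number is $b_1=\dim\mathfrak{n}-\dim\mathfrak{n}'$. *)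

theory Defs
  imports "HOL-Analysis.Analysis"
begin

text \<open>A finite-dimensional real Lie algebra is modelled as a type of class
euclidean_space (any finite-dimensional real vector space) with a bracket.\<close>

definition lie_algebra :: "('a::euclidean_space \<Rightarrow> 'a \<Rightarrow> 'a) \<Rightarrow> bool" where
  "lie_algebra br \<longleftrightarrow> bilinear br \<and> (\<forall>x. br x x = 0) \<and>
     (\<forall>x y z. br x (br y z) + br y (br z x) + br z (br x y) = 0)"

definition lie_center :: "('a::euclidean_space \<Rightarrow> 'a \<Rightarrow> 'a) \<Rightarrow> 'a set" where
  "lie_center br = {x. \<forall>y. br x y = 0}"

definition derived_algebra :: "('a::euclidean_space \<Rightarrow> 'a \<Rightarrow> 'a) \<Rightarrow> 'a set" where
  "derived_algebra br = span {br x y | x y. True}"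

definition two_step_nilpotent :: "('a::euclidean_space \<Rightarrow> 'a \<Rightarrow> 'a) \<Rightarrow> bool" where
  "two_step_nilpotent br \<longleftrightarrow> (\<exists>x y. br x y \<noteq> 0) \<and> derived_algebra br \<subseteq> lie_center br"

definition first_betti :: "('a::euclidean_space \<Rightarrow> 'a \<Rightarrow> 'a) \<Rightarrow> nat" where
  "first_betti br = DIM('a) - dim (derived_algebra br)"

definition complex_structure :: "('a::euclidean_space \<Rightarrow> 'a \<Rightarrow> 'a) \<Rightarrow> ('a \<Rightarrow> 'a) \<Rightarrow> bool" where
  "complex_structure br J \<longleftrightarrow> linear J \<and> (\<forall>x. J (J x) = - x) \<and>
     (\<forall>x y. br x y + J (br (J x) y + br x (J y)) - br (J x) (J y) = 0)"

primrec asc_series :: "('a::euclidean_space \<Rightarrow> 'a \<Rightarrow> 'a) \<Rightarrow> ('a \<Rightarrow> 'a) \<Rightarrow> nat \<Rightarrow> 'a set" where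
  "asc_series br J 0 = {0}"
| "asc_series br J (Suc l) = {x. (\<forall>y. br x y \<in> asc_series br J l) \<and> (\<forall>y. br (J x) y \<in> asc_series br J l)}"

definition step_nilpotent_cs :: "('a::euclidean_space \<Rightarrow> 'a \<Rightarrow> 'a) \<Rightarrow> ('a \<Rightarrow> 'a) \<Rightarrow> nat \<Rightarrow> bool" where
  "step_nilpotent_cs br J t \<longleftrightarrow> 0 < t \<and> asc_series br J t = UNIV \<and>
     (\<forall>s. 0 < s \<and> s < t \<longrightarrow> asc_series br J s \<noteq> UNIV)"

end

theory Submission
  imports Defs
begin

lemma center_subspace:
  assumes "lie_algebra br" shows "subspace (lie_center br)"
proof -
  have bl: "bilinear br" using assms by (simp add: lie_algebra_def)
  have l: "linear (\<lambda>x. br x y)" for y using bl by (simp add: bilinear_def)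
  show ?thesis
    unfolding subspace_def lie_center_def
    using linear_add[OF l] linear_cmul[OF l] linear_0[OF l] by auto
qed

lemma key_center_inv:
  fixes br :: "'a::euclidean_space \<Rightarrow> 'a \<Rightarrow> 'a"
  assumes la: "lie_algebra br" and ts: "two_step_nilpotent br"
    and dz: "dim (lie_center br) = 2" and cs: "complex_structure br J"
    and c: "c \<in> lie_center br"
  shows "J c \<in> lie_center br"
proof -
  let ?Z = "lie_center br"
  define A where "A = {x. x \<in> ?Z \<and> J x \<in> ?Z}"
  have lJ: "linear J" and JJ: "\<And>x. J (J x) = - x"
    and N: "\<And>x y. br x y + J (br (J x) y + br x (J y)) - br (J x) (J y) = 0"
    using cs by (auto simp: complex_structure_def)
  have sZ: "subspace ?Z" using center_subspace[OF la] .
  have brZ: "br u v \<in> ?Z" for u v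
  proof -
    have "br u v \<in> derived_algebra br" unfolding derived_algebra_def
      by (rule span_base) blast
    then show ?thesis using ts unfolding two_step_nilpotent_def by blast
  qed
  have zero: "br x y = 0" if "x \<in> ?Z" for x y using that by (simp add: lie_center_def)
  have sA: "subspace A"
    unfolding A_def subspace_def using sZ[unfolded subspace_def] linear_add[OF lJ] linear_cmul[OF lJ] linear_0[OF lJ]
    by simp
  have inA: "br (J c') y \<in> A" if "c' \<in> ?Z" for c' y
  proof -
    have "J (br (J c') y) = br (J c') (J y)"
      using N[of c' y] zero[OF that] by (simp add: algebra_simps)
    then show ?thesis unfolding A_def using brZ by auto
  qed
  show ?thesis
  proof (cases "\<exists>a\<in>A. a \<noteq> 0")
    case True
    then obtain a where a: "a \<in> A" "a \<noteq> 0" by auto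
    have Ja: "J a \<in> A" using a(1) JJ sZ unfolding A_def by (auto simp: subspace_neg)
    have nsp: "J a \<notin> span {a}"
    proof
      assume "J a \<in> span {a}"
      then obtain k where k: "J a = k *\<^sub>R a" by (auto simp: span_singleton)
      have "- a = J (J a)" using JJ by simp
      also have "\<dots> = k *\<^sub>R J a" using k lJ by (simp add: linear_cmul)
      also have "\<dots> = (k*k) *\<^sub>R a" using k by simp
      finally have "(k*k + 1) *\<^sub>R a = 0" by (simp add: scaleR_add_left) (metis add.commute neg_eq_iff_add_eq_0)
      moreover have "k*k + 1 \<noteq> 0" by (smt (verit) zero_le_square)
      ultimately show False using a(2) by simp
    qed
    have ind: "independent {J a, a}"
      using nsp a(2) by (simp add: independent_insertI)
    have neq: "J a \<noteq> a" using nsp by (metis span_base singletonI)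
    have sub: "{J a, a} \<subseteq> ?Z" using a(1) Ja unfolding A_def by auto
    have "?Z \<subseteq> span {J a, a}"
      by (rule card_ge_dim_independent[OF sub ind]) (simp add: dz neq)
    also have "\<dots> \<subseteq> A" using a(1) Ja sA by (simp add: span_minimal)
    finally show ?thesis using c unfolding A_def by auto
  next
    case False
    have "br (J c) y = 0" for y using inA[OF c, of y] False by auto
    then show ?thesis by (simp add: lie_center_def)
  qed
qed

lemma part1:
  fixes br :: "'a::euclidean_space \<Rightarrow> 'a \<Rightarrow> 'a"
  assumes la: "lie_algebra br" and ts: "two_step_nilpotent br"
    and dz: "dim (lie_center br) = 2" and cs: "complex_structure br J"
  shows "step_nilpotent_cs br J 2"
proof -
  let ?Z = "lie_center br"
  have a1: "asc_series br J 1 = {x. x \<in> ?Z \<and> J x \<in> ?Z}"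
    by (simp add: lie_center_def)
  have brZ: "br u v \<in> ?Z" for u v
  proof -
    have "br u v \<in> derived_algebra br" unfolding derived_algebra_def
      by (rule span_base) blast
    then show ?thesis using ts unfolding two_step_nilpotent_def by blast
  qed
  have a2: "asc_series br J 2 = UNIV"
  proof -
    have "br u v \<in> asc_series br J 1" for u v
      using a1 brZ key_center_inv[OF la ts dz cs brZ] by auto
    then show ?thesis by (simp add: numeral_2_eq_2 del: asc_series.simps(2)) (simp add: lie_center_def)
  qed
  have n1: "asc_series br J 1 \<noteq> UNIV"
  proof
    assume "asc_series br J 1 = UNIV"
    then have "\<forall>x. x \<in> ?Z" using a1 by auto
    then show False using ts by (auto simp: two_step_nilpotent_def lie_center_def)
  qed
  show ?thesis unfolding step_nilpotent_cs_def using a2 n1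
    by (metis less_2_cases_iff less_nat_zero_code One_nat_def zero_less_numeral)
qed

theorem mainTheorem5:
  fixes br :: "'a::euclidean_space \<Rightarrow> 'a \<Rightarrow> 'a"
  assumes "lie_algebra br" and "two_step_nilpotent br"
  shows "(dim (lie_center br) = 2 \<longrightarrow>
            (\<forall>J. complex_structure br J \<longrightarrow> step_nilpotent_cs br J 2)) \<and>
         (derived_algebra br = lie_center br \<and> first_betti br = DIM('a) - 2 \<longrightarrow>
            (\<forall>J. complex_structure br J \<longrightarrow> step_nilpotent_cs br J 2))"
proof -
  have P1: "dim (lie_center br) = 2 \<Longrightarrow> step_nilpotent_cs br J 2" if "complex_structure br J" for J
    using part1[OF assms _ that] by blast
  have "dim (lie_center br) = 2"
    if h: "derived_algebra br = lie_center br" "first_betti br = DIM('a) - 2"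
  proof (rule ccontr)
    assume ne: "dim (lie_center br) \<noteq> 2"
    have le: "dim (lie_center br) \<le> DIM('a)" by (rule dim_subset_UNIV)
    have "DIM('a) - dim (lie_center br) = DIM('a) - 2" using h by (simp add: first_betti_def)
    then have "dim (lie_center br) = DIM('a)" using ne le by linarith
    then have "span (lie_center br) = UNIV" by (simp add: dim_eq_full)
    then have "lie_center br = UNIV"
      using span_eq_iff center_subspace[OF assms(1)] by metis
    then show False using assms(2) by (auto simp: two_step_nilpotent_def lie_center_def)
  qed
  then show ?thesis using P1 by blast
qed

end
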